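(* Let $\mathcal{M}$ be a separable metric space, $f:\mathcal{M}\to\mathcal{M}$ continuous, $\mathcal{X}\subseteq\mathcal{M}$ forward invariant under $f$, $\mathcal{Z}$ a separable metric space, $g:\mathcal{Z}\to\mathcal{Z}$, and $F:\mathcal{X}\to\mathcal{Z}$ continuous with $F\circ f=g\circ F$ on $\mathcal{X}$. For any $\xi\in\mathcal{X}$, if the trajectory through $\xi$ is forward precompact in $\mathcal{X}$, then $F(\xi)\in D^+_{\mathcal{Z}}(F(\omega_{\mathcal{X}}(\xi)))$.
   Context: $\omega_{\mathcal{X}}(\xi)$ is the set of $x\in\mathcal{X}$ such that $f^{k_j}(\xi)\to x$ for some indices $k_j\to\infty$; $\omega_{\mathcal{Z}}(\zeta)$ is defined analogously for $g$ on $\mathcal{Z}$. $D^+_{\mathcal{Z}}(\Omega)=\{\zeta\in\mathcal{Z}\mid\omega_{\mathcal{Z}}(\zeta)=\Omega\}$. The trajectory through $\xi$ is forward precompact in $\mathcal{X}$ if the closure in $\mathcal{X}$ of $\{f^k(\xi)\mid k\in\mathbb{N}\}$ is compact. *)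

theory Defs
  imports "HOL-Analysis.Analysis"
begin

definition omega_limit :: "'a set \<Rightarrow> ('a \<Rightarrow> 'a) \<Rightarrow> 'a \<Rightarrow> 'a::topological_space set" where
  "omega_limit S f \<xi> = {x \<in> S. \<exists>k::nat \<Rightarrow> nat. filterlim k at_top sequentially \<and>
        ((\<lambda>j. (f ^^ k j) \<xi>) \<longlongrightarrow> x) sequentially}"

definition D_plus :: "'a set \<Rightarrow> ('a \<Rightarrow> 'a) \<Rightarrow> 'a set \<Rightarrow> 'a::topological_space set" where
  "D_plus S g \<Omega> = {\<zeta> \<in> S. omega_limit S g \<zeta> = \<Omega>}"

definition forward_precompact :: "'a::topological_space set \<Rightarrow> ('a \<Rightarrow> 'a) \<Rightarrow> 'a \<Rightarrow> bool" where
  "forward_precompact X f \<xi> \<longleftrightarrow>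
     compactin (subtopology euclidean X) (X \<inter> closure (range (\<lambda>k. (f ^^ k) \<xi>)))"

end

theory Submission
  imports Defs
begin

theorem corollary26:
  fixes f :: "'m::metric_space \<Rightarrow> 'm" and X :: "'m set"
    and g :: "'z::metric_space \<Rightarrow> 'z" and F :: "'m \<Rightarrow> 'z" and \<xi> :: 'm
  assumes "separable_space (euclidean :: 'm topology)"
    and "continuous_on UNIV f"
    and "f ` X \<subseteq> X"
    and "separable_space (euclidean :: 'z topology)"
    and "continuous_on X F"
    and "\<forall>x\<in>X. F (f x) = g (F x)"
    and "\<xi> \<in> X"
    and "forward_precompact X f \<xi>"
  shows "F \<xi> \<in> D_plus UNIV g (F ` omega_limit X f \<xi>)"
proof -
  define K where "K = X \<inter> closure (range (\<lambda>k. (f ^^ k) \<xi>))"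
  have K: "compact K" using assms(8) unfolding forward_precompact_def K_def
    by (simp add: compactin_subtopology compactin_euclidean_iff)
  have inX: "(f ^^ k) \<xi> \<in> X" for k
    by (induction k) (use assms(3,7) in auto)
  have inK: "(f ^^ k) \<xi> \<in> K" for k
    using inX closure_subset[of "range (\<lambda>k. (f ^^ k) \<xi>)"] unfolding K_def by blast
  have comm: "(g ^^ k) (F \<xi>) = F ((f ^^ k) \<xi>)" for k
    by (induction k) (use assms(6) inX in auto)
  have Fcont: "((\<lambda>j. F ((f ^^ k j) \<xi>)) \<longlongrightarrow> F x) sequentially"
    if "((\<lambda>j. (f ^^ k j) \<xi>) \<longlongrightarrow> x) sequentially" "x \<in> X" for k x
    using continuous_on_tendsto_compose[OF assms(5) that] inX by auto
  have "omega_limit UNIV g (F \<xi>) = F ` omega_limit X f \<xi>"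
  proof
    show "F ` omega_limit X f \<xi> \<subseteq> omega_limit UNIV g (F \<xi>)"
    proof
      fix z assume "z \<in> F ` omega_limit X f \<xi>"
      then obtain x k where x: "x \<in> X" "z = F x" "filterlim k at_top sequentially"
        "((\<lambda>j. (f ^^ k j) \<xi>) \<longlongrightarrow> x) sequentially"
        unfolding omega_limit_def by auto
      show "z \<in> omega_limit UNIV g (F \<xi>)"
        unfolding omega_limit_def using x Fcont[OF x(4) x(1)] comm by auto
    qed
  next
    show "omega_limit UNIV g (F \<xi>) \<subseteq> F ` omega_limit X f \<xi>"
    proof
      fix z assume "z \<in> omega_limit UNIV g (F \<xi>)"
      then obtain k where k: "filterlim k at_top sequentially"
        "((\<lambda>j. (g ^^ k j) (F \<xi>)) \<longlongrightarrow> z) sequentially"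
        unfolding omega_limit_def by auto
      obtain x r where xr: "x \<in> K" "strict_mono r"
        "((\<lambda>j. (f ^^ k j) \<xi>) \<circ> r) \<longlonglongrightarrow> x"
        using K[unfolded compact_eq_seq_compact_metric seq_compact_def,
            rule_format, of "\<lambda>j. (f ^^ k j) \<xi>"] inK by blast
      have xX: "x \<in> X" using xr(1) K_def by auto
      have kr: "filterlim (k \<circ> r) at_top sequentially"
        using filterlim_compose[OF k(1) filterlim_subseq[OF xr(2)]] by (simp add: comp_def)
      have t: "((\<lambda>j. (f ^^ (k \<circ> r) j) \<xi>) \<longlongrightarrow> x) sequentially"
        using xr(3) by (simp add: comp_def)
      have "((\<lambda>j. F ((f ^^ (k \<circ> r) j) \<xi>)) \<longlongrightarrow> F x) sequentially"
        using Fcont[OF t xX] .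
      moreover have "((\<lambda>j. F ((f ^^ (k \<circ> r) j) \<xi>)) \<longlongrightarrow> z) sequentially"
        using LIMSEQ_subseq_LIMSEQ[OF k(2) xr(2)] comm by (simp add: comp_def)
      ultimately have "z = F x" using LIMSEQ_unique by blast
      moreover have "x \<in> omega_limit X f \<xi>"
        unfolding omega_limit_def using xX kr t by blast
      ultimately show "z \<in> F ` omega_limit X f \<xi>" by blast
    qed
  qed
  then show ?thesis unfolding D_plus_def by auto
qed

end
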